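(* Let $\bar\rho>0$, $\bar\theta>0$, $R>0$, $c_v>0$, $\nu_0>0$, $k_0>0$ be constants and for $\xi\in\mathbb{R}$ let \[ A(\xi)=\begin{pmatrix}0&\bar\rho i\xi&0\\ \frac{R\bar\theta}{\bar\rho}i\xi&-\nu_0\xi^2&Ri\xi\\ 0&\frac{R\bar\theta}{c_v}i\xi&-k_0\xi^2\end{pmatrix}. \] Let $-\delta(\xi)$ be an eigenvalue of $A(\xi)$ (defined for $|\xi|$ large) with $\lim_{|\xi|\to\infty}\delta(\xi)=\omega_0:=R\bar\theta/\nu_0$. Then, for $\xi\neq0$, the vector $\left(1,\frac{i\delta(\xi)}{\bar\rho\xi},d_\delta(\xi)\right)$, where \[ d_\delta(\xi)=-\frac{\delta(\xi)^2-\nu_0\xi^2\delta(\xi)+R\bar\theta\xi^2}{R\bar\rho\xi^2}, \] is an eigenvector of $A(\xi)$ for the eigenvalue $-\delta(\xi)$, and for $|\xi|$ sufficiently large $|d_\delta(\xi)|\le C/|\xi|^2$ for some positive constant $C$.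
   Context: Such an eigenvalue branch $-\delta(\xi)$ exists for $|\xi|$ sufficiently large. *)

theory Defs
  imports "HOL-Analysis.Analysis" "Jordan_Normal_Form.Char_Poly"
begin

definition Amat :: "real \<Rightarrow> real \<Rightarrow> real \<Rightarrow> real \<Rightarrow> real \<Rightarrow> real \<Rightarrow> real \<Rightarrow> complex mat" where
  "Amat rho theta R cv nu0 k0 xi = mat_of_rows_list 3
     [[0, of_real rho * \<i> * of_real xi, 0],
      [of_real (R * theta / rho) * \<i> * of_real xi, - of_real (nu0 * xi^2), of_real R * \<i> * of_real xi],
      [0, of_real (R * theta / cv) * \<i> * of_real xi, - of_real (k0 * xi^2)]]"

definition d_delta :: "real \<Rightarrow> real \<Rightarrow> real \<Rightarrow> real \<Rightarrow> complex \<Rightarrow> real \<Rightarrow> complex" where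
  "d_delta rho theta R nu0 \<delta> xi =
     - ((\<delta>^2 - of_real (nu0 * xi^2) * \<delta> + of_real (R * theta * xi^2)) / of_real (R * rho * xi^2))"

end

theory Submission
  imports Defs
begin

lemma all_less3: "(\<forall>i<(3::nat). P i) \<longleftrightarrow> P 0 \<and> P 1 \<and> P 2"
  by (auto simp: numeral_3_eq_3 numeral_2_eq_2 less_Suc_eq)

lemma sum3: "sum f {0..<(3::nat)} = f 0 + f 1 + f 2"
  by (simp add: numeral_3_eq_3 numeral_2_eq_2)

lemma Amat_mult:
  assumes "w \<in> carrier_vec 3"
  shows "(Amat rho theta R cv nu0 k0 xi *\<^sub>v w = l \<cdot>\<^sub>v w) \<longleftrightarrow>
    (of_real rho * \<i> * of_real xi * w$1 = l * w$0 \<and>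
     of_real (R * theta / rho) * \<i> * of_real xi * w$0 - of_real (nu0 * xi^2) * w$1 + of_real R * \<i> * of_real xi * w$2 = l * w$1 \<and>
     of_real (R * theta / cv) * \<i> * of_real xi * w$1 - of_real (k0 * xi^2) * w$2 = l * w$2)" (is "_ \<longleftrightarrow> ?R")
proof -
  have c: "Amat rho theta R cv nu0 k0 xi \<in> carrier_mat 3 3"
    unfolding Amat_def mat_of_rows_list_def carrier_mat_def by simp
  have "(Amat rho theta R cv nu0 k0 xi *\<^sub>v w = l \<cdot>\<^sub>v w) \<longleftrightarrow> (\<forall>i<3. (Amat rho theta R cv nu0 k0 xi *\<^sub>v w) $ i = (l \<cdot>\<^sub>v w) $ i)"
    using c assms by (auto simp: vec_eq_iff)
  also have "\<dots> \<longleftrightarrow> ?R" 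
    using assms unfolding all_less3
    by (simp add: Amat_def mat_of_rows_list_def scalar_prod_def sum3 algebra_simps)
  finally show ?thesis .
qed

lemma part1:
  fixes rho theta R cv nu0 k0 xi :: real and dl :: complex
  assumes pos: "rho > 0" "theta > 0" "R > 0" "cv > 0" "nu0 > 0" "k0 > 0" and xi: "xi \<noteq> 0"
    and ev: "eigenvalue (Amat rho theta R cv nu0 k0 xi) (- dl)"
  shows "eigenvector (Amat rho theta R cv nu0 k0 xi)
              (vec_of_list [1, \<i> * dl / of_real (rho * xi), d_delta rho theta R nu0 dl xi]) (- dl)
      \<and> of_real (R * theta / cv) * \<i> * of_real xi * (\<i> * dl / of_real (rho * xi))
          - of_real (k0 * xi^2) * d_delta rho theta R nu0 dl xi = - dl * d_delta rho theta R nu0 dl xi"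
proof -
  let ?A = "Amat rho theta R cv nu0 k0 xi"
  have c: "?A \<in> carrier_mat 3 3"
    unfolding Amat_def mat_of_rows_list_def carrier_mat_def by simp
  obtain w where w: "eigenvector ?A w (- dl)" using ev unfolding eigenvalue_def by blast
  have wc: "w \<in> carrier_vec 3" and wn: "w \<noteq> 0\<^sub>v 3" and wA: "?A *\<^sub>v w = (- dl) \<cdot>\<^sub>v w"
    using w c unfolding eigenvector_def by auto
  from wA have W: "of_real rho * \<i> * of_real xi * w$1 = (- dl) * w$0"
     "of_real (R * theta / rho) * \<i> * of_real xi * w$0 - of_real (nu0 * xi^2) * w$1 + of_real R * \<i> * of_real xi * w$2 = (- dl) * w$1"
    using Amat_mult[OF wc] by blast+
  have nz: "complex_of_real rho \<noteq> 0" "complex_of_real xi \<noteq> 0" "complex_of_real R \<noteq> 0"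
    using pos xi by auto
  have w0: "w$0 \<noteq> 0"
  proof
    assume h: "w$0 = 0"
    with W(1) nz have h1: "w$1 = 0" by simp
    with W(2) h nz have h2: "w$2 = 0" by simp
    have "w = 0\<^sub>v 3" using wc h h1 h2 by (intro eq_vecI) (auto simp: all_less3[unfolded atomize_all] less_Suc_eq numeral_3_eq_3 numeral_2_eq_2)
    with wn show False by simp
  qed
  define u where "u = (1 / w$0) \<cdot>\<^sub>v w"
  have uc: "u \<in> carrier_vec 3" using wc by (simp add: u_def)
  have uA: "?A *\<^sub>v u = (- dl) \<cdot>\<^sub>v u"
    unfolding u_def mult_mat_vec[OF c wc] wA by (auto simp: vec_eq_iff)
  have u0: "u$0 = 1" using wc w0 by (simp add: u_def)
  from uA have U: "of_real rho * \<i> * of_real xi * u$1 = (- dl) * u$0"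
     "of_real (R * theta / rho) * \<i> * of_real xi * u$0 - of_real (nu0 * xi^2) * u$1 + of_real R * \<i> * of_real xi * u$2 = (- dl) * u$1"
     "of_real (R * theta / cv) * \<i> * of_real xi * u$1 - of_real (k0 * xi^2) * u$2 = (- dl) * u$2"
    using Amat_mult[OF uc] by blast+
  have u1: "u$1 = \<i> * dl / of_real (rho * xi)"
  proof -
    have "u$1 = - dl / (of_real rho * \<i> * of_real xi)" using U(1) u0 nz by (simp add: field_simps)
    also have "\<dots> = \<i> * dl / of_real (rho * xi)" using nz by (simp add: field_simps)
    finally show ?thesis .
  qed
  have u2: "u$2 = d_delta rho theta R nu0 dl xi"
  proof -
    have "u$2 = ((- dl) * u$1 + of_real (nu0 * xi^2) * u$1 - of_real (R * theta / rho) * \<i> * of_real xi) / (of_real R * \<i> * of_real xi)"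
      using U(2) u0 nz by (simp add: field_simps)
    also have "\<dots> = d_delta rho theta R nu0 dl xi" unfolding u1 d_delta_def using nz
      by (simp add: field_simps power2_eq_square)
    finally show ?thesis .
  qed
  have vu: "vec_of_list [1, \<i> * dl / of_real (rho * xi), d_delta rho theta R nu0 dl xi] = u"
    using uc u0 u1 u2 by (intro eq_vecI) (auto simp: less_Suc_eq numeral_3_eq_3 numeral_2_eq_2)
  have "u \<noteq> 0\<^sub>v 3" using u0 by (metis index_zero_vec(1) zero_less_numeral zero_neq_one)
  then show ?thesis using U(3) uA uc c unfolding vu eigenvector_def u1 u2 by simp
qed


theorem lemma2p7:
  fixes rho theta R cv nu0 k0 M :: real and \<delta> :: "real \<Rightarrow> complex"
  assumes "rho > 0" "theta > 0" "R > 0" "cv > 0" "nu0 > 0" "k0 > 0"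
    and eig: "\<forall>xi. M \<le> \<bar>xi\<bar> \<longrightarrow> eigenvalue (Amat rho theta R cv nu0 k0 xi) (- \<delta> xi)"
    and lim: "(\<delta> \<longlongrightarrow> of_real (R * theta / nu0)) at_infinity"
  shows "(\<forall>xi. M \<le> \<bar>xi\<bar> \<and> xi \<noteq> 0 \<longrightarrow>
            eigenvector (Amat rho theta R cv nu0 k0 xi)
              (vec_of_list [1, \<i> * \<delta> xi / of_real (rho * xi), d_delta rho theta R nu0 (\<delta> xi) xi])
              (- \<delta> xi))
         \<and> (\<exists>C>0. \<forall>\<^sub>F xi in at_infinity. cmod (d_delta rho theta R nu0 (\<delta> xi) xi) \<le> C / xi^2)"
proof
  note P = part1[OF assms(1-6)]
  show "\<forall>xi. M \<le> \<bar>xi\<bar> \<and> xi \<noteq> 0 \<longrightarrow>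
            eigenvector (Amat rho theta R cv nu0 k0 xi)
              (vec_of_list [1, \<i> * \<delta> xi / of_real (rho * xi), d_delta rho theta R nu0 (\<delta> xi) xi])
              (- \<delta> xi)" using P eig by blast
  define B where "B = R * theta / nu0 + 1"
  define K where "K = R * theta / (cv * rho)"
  have Bp: "B > 0" using assms by (simp add: B_def add_pos_pos)
  have Kp: "K > 0" using assms by (simp add: K_def)
  have "\<forall>\<^sub>F x in at_infinity. dist (\<delta> x) (of_real (R * theta / nu0)) < 1"
    using lim by (rule tendstoD) simp
  then have ev1: "\<forall>\<^sub>F x in at_infinity. cmod (\<delta> x) \<le> B"
  proof (rule eventually_mono)
    fix x assume "dist (\<delta> x) (of_real (R * theta / nu0)) < 1"
    then have "cmod (\<delta> x) \<le> cmod (of_real (R * theta / nu0) :: complex) + 1"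
      by (metis dist_norm norm_triangle_sub add.commute less_imp_le order_trans add_le_cancel_left norm_minus_commute)
    moreover have "cmod (of_real (R * theta / nu0) :: complex) = R * theta / nu0"
      using assms by (simp only: norm_of_real) simp
    ultimately show "cmod (\<delta> x) \<le> B" by (simp only: B_def)
  qed
  define b where "b = max M (max 1 (sqrt (2 * B / k0)))"
  have ev2: "\<forall>\<^sub>F x in at_infinity. b \<le> norm (x::real)"
    unfolding eventually_at_infinity by blast
  have "\<forall>\<^sub>F x in at_infinity. cmod (d_delta rho theta R nu0 (\<delta> x) x) \<le> (2 * K * B / k0) / x^2"
    using ev1 ev2
  proof (eventually_elim)
    case (elim x)
    have xM: "M \<le> \<bar>x\<bar>" and x1: "1 \<le> \<bar>x\<bar>" and xs: "sqrt (2 * B / k0) \<le> \<bar>x\<bar>"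
      using elim(2) by (auto simp: b_def)
    have x0: "x \<noteq> 0" using x1 by auto
    have x2: "2 * B / k0 \<le> x^2"
      using xs Bp assms(6) by (metis abs_ge_zero less_imp_le real_sqrt_abs real_sqrt_le_iff power2_abs zero_le_divide_iff zero_le_mult_iff zero_le_numeral real_sqrt_le_mono sqrt_le_D)
    then have kx: "2 * B \<le> k0 * x^2" using assms(6) by (simp add: field_simps)
    let ?d = "d_delta rho theta R nu0 (\<delta> x) x"
    have rel: "of_real (R * theta / cv) * \<i> * of_real x * (\<i> * \<delta> x / of_real (rho * x))
          - of_real (k0 * x^2) * ?d = - \<delta> x * ?d"
      using P[OF x0] eig xM by blast
    have rel2: "?d * (of_real (k0 * x^2) - \<delta> x) = - of_real K * \<delta> x"
    proof -
      have "of_real (R * theta / cv) * \<i> * of_real x * (\<i> * \<delta> x / of_real (rho * x)) = - of_real K * \<delta> x"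
        using x0 assms by (simp add: K_def field_simps)
      with rel show ?thesis by (simp add: algebra_simps)
    qed
    have low: "k0 * x^2 / 2 \<le> cmod (of_real (k0 * x^2) - \<delta> x)"
    proof -
      have "cmod (of_real (k0 * x^2) :: complex) - cmod (\<delta> x) \<le> cmod (of_real (k0 * x^2) - \<delta> x)"
        by (rule norm_triangle_ineq2)
      moreover have "cmod (of_real (k0 * x^2) :: complex) = k0 * x^2" using assms by (simp only: norm_of_real) simp
      ultimately show ?thesis using elim(1) kx by linarith
    qed
    have kx0: "k0 * x^2 / 2 > 0" using assms x0 by simp
    have "cmod ?d * cmod (of_real (k0 * x^2) - \<delta> x) = K * cmod (\<delta> x)"
      using rel2 Kp by (metis norm_minus_cancel norm_mult norm_of_real abs_of_pos mult_minus_left)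
    then have "cmod ?d * (k0 * x^2 / 2) \<le> K * B"
      by (metis (no_types, lifting) Kp elim(1) low mult_left_mono norm_ge_zero order_trans less_imp_le mult_le_cancel_left_pos)
    then have "cmod ?d \<le> K * B / (k0 * x^2 / 2)" using kx0 by (simp add: field_simps)
    also have "\<dots> = (2 * K * B / k0) / x^2" using assms x0 by (simp add: field_simps)
    finally show ?case .
  qed
  moreover have "2 * K * B / k0 > 0" using Kp Bp assms by simp
  ultimately show "\<exists>C>0. \<forall>\<^sub>F xi in at_infinity. cmod (d_delta rho theta R nu0 (\<delta> xi) xi) \<le> C / xi^2"
    by blast
qed

end
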